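(* Let $n\ge1$ and $a,b>0$. Define $X_1=\frac{\arctan\sqrt{b/a}}{\sqrt{ab}}$, $X_2=\frac{1}{2a(a+b)}$, and $X_n=\left(\frac{\partial}{\partial a}\right)^{m-1}\left(\frac{\partial}{\partial b}\right)^{m-1}X_1$ if $n=2m-1$ ($m\ge1$), $X_n=\left(\frac{\partial}{\partial a}\right)^{m-2}\left(\frac{\partial}{\partial b}\right)^{m-2}X_2$ if $n=2m-2$ ($m\ge2$). Then: if $n=2m-1$, $$X_n=\frac{(2m-2)!\,(2m-3)!!}{(2m-2)!!\,(2^2ab)^{m-1}}\left\{\frac{\arctan\sqrt{b/a}}{\sqrt{ab}}+\sum_{k=1}^{m-1}\frac{(2k-2)!!\,(b-a)(2^2ab)^{k-1}}{(2k-1)!!\,(a+b)^{2k}}\right\};$$ if $n=2m-2$, $$X_n=\frac{(2m-3)!\,(2m-4)!!}{(2m-3)!!\,(2^2ab)^{m-2}}\left\{\frac{1}{2a(a+b)}+\sum_{k=2}^{m-1}\frac{(2k-3)!!\,(b-a)(2^2ab)^{k-2}}{(2k-2)!!\,(a+b)^{2k-1}}\right\}.$$ Consequently, for $x=(x_1,\dots,x_{n+1})\in\mathbf{R}^{n+1}$ with $r=\sqrt{\sum_{j=1}^{n+1}x_j^2}$ and $r>|x_{n+1}|$, the function $$f(r,x_{n+1})=\int_0^1\frac{2^nt^{n-1}}{\{r-x_{n+1}+t^2(r+x_{n+1})\}^n}\,dt$$ is given as follows: if $n=2m-1$, $$f(r,x_{n+1})=\frac{(2m-3)!!}{(2m-2)!!\,(r^2-x_{2m}^2)^{m-1}}\left\{\frac{2\arctan\sqrt{\frac{r+x_{2m}}{r-x_{2m}}}}{(r^2-x_{2m}^2)^{1/2}}+\sum_{k=1}^{m-1}\frac{(2k-2)!!\,x_{2m}(r^2-x_{2m}^2)^{k-1}}{(2k-1)!!\,r^{2k}}\right\};$$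 if $n=2m-2$, $$f(r,x_{n+1})=\frac{(2m-4)!!}{(2m-3)!!\,(r^2-x_{2m-1}^2)^{m-1}}\left\{1+\sum_{k=1}^{m-1}\frac{(2k-3)!!\,x_{2m-1}(r^2-x_{2m-1}^2)^{k-1}}{(2k-2)!!\,r^{2k-1}}\right\}.$$
   Context: Double factorials use the conventions $(-1)!!=0!!=1$. Empty sums are zero. Here $a=r-x_{n+1}$, $b=r+x_{n+1}$ relate the two parts of the statement, and $f(r,x_{n+1})=\frac{2^n}{(n-1)!}X_n$ evaluated at these $a,b$. *)

theory Defs
  imports "HOL-Analysis.Analysis"
begin

text \<open>Double factorial on integers, with the conventions (-1)!! = 0!! = 1
  (arguments below -1 never occur in the statement).\<close>
function dfact :: "int \<Rightarrow> nat" where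
  "dfact k = (if k \<le> 0 then 1 else nat k * dfact (k - 2))"
  by auto
termination by (relation "Wellfounded.measure nat") auto

definition pda :: "(real \<Rightarrow> real \<Rightarrow> real) \<Rightarrow> real \<Rightarrow> real \<Rightarrow> real" where
  "pda F = (\<lambda>a b. deriv (\<lambda>s. F s b) a)"

definition pdb :: "(real \<Rightarrow> real \<Rightarrow> real) \<Rightarrow> real \<Rightarrow> real \<Rightarrow> real" where
  "pdb F = (\<lambda>a b. deriv (\<lambda>s. F a s) b)"

definition X1 :: "real \<Rightarrow> real \<Rightarrow> real" where
  "X1 a b = arctan (sqrt (b / a)) / sqrt (a * b)"

definition X2 :: "real \<Rightarrow> real \<Rightarrow> real" where
  "X2 a b = 1 / (2 * a * (a + b))"

definition Xn :: "nat \<Rightarrow> real \<Rightarrow> real \<Rightarrow> real" where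
  "Xn n = (if odd n
     then (pda ^^ ((n + 1) div 2 - 1)) ((pdb ^^ ((n + 1) div 2 - 1)) X1)
     else (pda ^^ (n div 2 - 1)) ((pdb ^^ (n div 2 - 1)) X2))"

definition fint :: "nat \<Rightarrow> real \<Rightarrow> real \<Rightarrow> real" where
  "fint n r y = integral {0..1}
     (\<lambda>t. 2 ^ n * t ^ (n - 1) / (r - y + t\<^sup>2 * (r + y)) ^ n)"

end

theory Submission
  imports Defs
begin

declare dfact.simps[simp del]

lemma pow_div_deriv:
  assumes g: "(g has_real_derivative g') (at x within S)" and pos: "g x > 0"
  shows "((\<lambda>s. c / g s ^ q) has_real_derivative (- real q * c * g' / g x ^ Suc q)) (at x within S)"
proof -
  have "((\<lambda>s. c / g s ^ q) has_real_derivative (- (c * (real q * g x ^ (q - 1) * g')) / (g x ^ q * g x ^ q))) (at x within S)"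
    using pos g by (intro derivative_eq_intros refl) auto
  moreover have "- (c * (real q * g x ^ (q - 1) * g')) / (g x ^ q * g x ^ q) = - real q * c * g' / g x ^ Suc q"
  proof (cases q)
    case (Suc k)
    have "g x ^ q * g x ^ q = g x ^ Suc q * g x ^ k" by (simp add: Suc power_add[symmetric])
    then show ?thesis using pos Suc by (simp add: field_simps)
  qed simp
  ultimately show ?thesis by simp
qed

lemma den_ne: "0 < (x::real) \<Longrightarrow> 0 < b \<Longrightarrow> x + t^2*b \<noteq> 0"
  by (metis add_pos_nonneg mult_nonneg_nonneg less_le zero_le_power2 less_imp_le)

definition J :: "nat \<Rightarrow> nat \<Rightarrow> real \<Rightarrow> real \<Rightarrow> real" where
  "J p q a b = integral {0..1} (\<lambda>t. t^p / (a + t^2*b)^q)"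

lemma J_da:
  assumes a: "a > 0" and b: "b > 0"
  shows "((\<lambda>s. J p q s b) has_real_derivative (- real q * J p (Suc q) a b)) (at a)"
proof -
  let ?U = "{0<..}::real set"
  have "((\<lambda>s. integral (cbox 0 1) (\<lambda>t. t^p / (s + t^2*b)^q)) has_field_derivative
      integral (cbox 0 1) (\<lambda>t. - real q * t^p * 1 / (a + t^2*b)^(Suc q))) (at a within ?U)"
  proof (rule leibniz_rule_field_derivative[where fx="\<lambda>s t. - real q * t^p * 1 / (s + t^2*b)^(Suc q)"])
    fix x t :: real assume x: "x \<in> ?U" and t: "t \<in> cbox 0 1"
    have d: "x + t^2*b > 0" using x b by (simp add: add_pos_nonneg)
    show "((\<lambda>s. t^p / (s + t^2*b)^q) has_field_derivative - real q * t^p * 1 / (x + t^2*b)^(Suc q)) (at x within ?U)"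
      by (rule pow_div_deriv[where g="\<lambda>s. s + t^2*b", OF _ d]) (auto intro!: derivative_eq_intros)
  next
    fix x :: real assume x: "x \<in> ?U"
    show "(\<lambda>t. t^p / (x + t^2*b)^q) integrable_on cbox 0 1"
      using x b by (intro integrable_continuous continuous_intros) (auto dest: den_ne)
  next
    show "continuous_on (?U \<times> cbox 0 1) (\<lambda>(x, t). - real q * t^p * 1 / (x + t^2*b)^(Suc q))"
      unfolding case_prod_beta using b by (intro continuous_intros) (auto simp: mem_Times_iff dest: den_ne)
  qed (use a in auto)
  moreover have "(\<lambda>t. - real q * t^p * 1 / (a + t^2*b)^(Suc q)) = (\<lambda>t. (- real q) * (t^p / (a + t^2*b)^(Suc q)))"
    by auto
  ultimately show ?thesis
    by (simp only: J_def at_within_open[of a ?U] a cbox_interval integral_mult_right greaterThan_iff open_greaterThan)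
qed

lemma J_db:
  assumes a: "a > 0" and b: "b > 0"
  shows "((\<lambda>s. J p q a s) has_real_derivative (- real q * J (p+2) (Suc q) a b)) (at b)"
proof -
  let ?U = "{0<..}::real set"
  have "((\<lambda>u. integral (cbox 0 1) (\<lambda>t. t^p / (a + t^2*u)^q)) has_field_derivative
      integral (cbox 0 1) (\<lambda>t. - real q * t^p * t^2 / (a + t^2*b)^(Suc q))) (at b within ?U)"
  proof (rule leibniz_rule_field_derivative[where fx="\<lambda>u t. - real q * t^p * t^2 / (a + t^2*u)^(Suc q)"])
    fix x t :: real assume x: "x \<in> ?U" and t: "t \<in> cbox 0 1"
    have d: "a + t^2*x > 0" using x a by (simp add: add_pos_nonneg)
    show "((\<lambda>u. t^p / (a + t^2*u)^q) has_field_derivative - real q * t^p * t^2 / (a + t^2*x)^(Suc q)) (at x within ?U)"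
      by (rule pow_div_deriv[where g="\<lambda>u. a + t^2*u", OF _ d]) (auto intro!: derivative_eq_intros)
  next
    fix x :: real assume x: "x \<in> ?U"
    show "(\<lambda>t. t^p / (a + t^2*x)^q) integrable_on cbox 0 1"
      using x a by (intro integrable_continuous continuous_intros) (auto dest: den_ne)
  next
    show "continuous_on (?U \<times> cbox 0 1) (\<lambda>(x, t). - real q * t^p * t^2 / (a + t^2*x)^(Suc q))"
      unfolding case_prod_beta using a by (intro continuous_intros) (auto simp: mem_Times_iff dest: den_ne)
  qed (use b in auto)
  moreover have "(\<lambda>t. - real q * t^p * t^2 / (a + t^2*b)^(Suc q)) = (\<lambda>t. (- real q) * (t^(p+2) / (a + t^2*b)^(Suc q)))"
    by (auto simp: power_add power2_eq_square mult_ac)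
  ultimately show ?thesis
    by (simp only: J_def at_within_open[of b ?U] b cbox_interval integral_mult_right greaterThan_iff open_greaterThan)
qed

lemma iter_b:
  assumes F: "\<And>a b. a > 0 \<Longrightarrow> b > 0 \<Longrightarrow> F a b = c * J p (Suc q) a b"
  shows "a > 0 \<Longrightarrow> b > 0 \<Longrightarrow> (pdb ^^ j) F a b = c * (-1)^j * fact (q + j) / fact q * J (p + 2*j) (Suc q + j) a b"
proof (induction j arbitrary: a b)
  case 0
  then show ?case using F by simp
next
  case (Suc j)
  let ?C = "c * (-1)^j * fact (q + j) / fact q"
  have ev: "eventually (\<lambda>s. (pdb ^^ j) F a s = ?C * J (p + 2*j) (Suc q + j) a s) (nhds b)"
  proof -
    have "eventually (\<lambda>s. s \<in> {0<..}) (nhds b)"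
      using Suc.prems by (intro eventually_nhds_in_open) auto
    then show ?thesis by (rule eventually_mono) (use Suc.IH Suc.prems in simp)
  qed
  have "((\<lambda>s. ?C * J (p + 2*j) (Suc q + j) a s) has_real_derivative
      ?C * (- real (Suc q + j) * J (p + 2*j + 2) (Suc (Suc q + j)) a b)) (at b)"
    by (intro DERIV_cmult J_db Suc.prems)
  then have "((\<lambda>s. (pdb ^^ j) F a s) has_real_derivative
      ?C * (- real (Suc q + j) * J (p + 2*j + 2) (Suc (Suc q + j)) a b)) (at b)"
    using DERIV_cong_ev[OF refl ev refl] by simp
  then have "(pdb ^^ Suc j) F a b = ?C * (- real (Suc q + j) * J (p + 2*j + 2) (Suc (Suc q + j)) a b)"
    by (simp add: pdb_def DERIV_imp_deriv)
  also have "\<dots> = c * (-1)^Suc j * fact (q + Suc j) / fact q * J (p + 2*Suc j) (Suc q + Suc j) a b"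
    by (simp add: field_simps)
  finally show ?case .
qed

lemma iter_a:
  assumes F: "\<And>a b. a > 0 \<Longrightarrow> b > 0 \<Longrightarrow> F a b = c * J p (Suc q) a b"
  shows "a > 0 \<Longrightarrow> b > 0 \<Longrightarrow> (pda ^^ j) F a b = c * (-1)^j * fact (q + j) / fact q * J p (Suc q + j) a b"
proof (induction j arbitrary: a b)
  case 0
  then show ?case using F by simp
next
  case (Suc j)
  let ?C = "c * (-1)^j * fact (q + j) / fact q"
  have ev: "eventually (\<lambda>s. (pda ^^ j) F s b = ?C * J p (Suc q + j) s b) (nhds a)"
  proof -
    have "eventually (\<lambda>s. s \<in> {0<..}) (nhds a)"
      using Suc.prems by (intro eventually_nhds_in_open) auto
    then show ?thesis by (rule eventually_mono) (use Suc.IH Suc.prems in simp)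
  qed
  have "((\<lambda>s. ?C * J p (Suc q + j) s b) has_real_derivative
      ?C * (- real (Suc q + j) * J p (Suc (Suc q + j)) a b)) (at a)"
    by (intro DERIV_cmult J_da Suc.prems)
  then have "((\<lambda>s. (pda ^^ j) F s b) has_real_derivative
      ?C * (- real (Suc q + j) * J p (Suc (Suc q + j)) a b)) (at a)"
    using DERIV_cong_ev[OF refl ev refl] by simp
  then have "(pda ^^ Suc j) F a b = ?C * (- real (Suc q + j) * J p (Suc (Suc q + j)) a b)"
    by (simp add: pda_def DERIV_imp_deriv)
  also have "\<dots> = c * (-1)^Suc j * fact (q + Suc j) / fact q * J p (Suc q + Suc j) a b"
    by (simp add: field_simps)
  finally show ?case .
qed

lemma ftc01:
  assumes "\<And>x. x \<in> {0..1} \<Longrightarrow> (F has_real_derivative f x) (at x)"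
  shows "integral {0..1} f = F 1 - F (0::real)"
proof -
  have "(f has_integral (F 1 - F 0)) {0..1}"
  proof (rule fundamental_theorem_of_calculus)
    fix x :: real assume "x \<in> {0..1}"
    then show "(F has_vector_derivative f x) (at x within {0..1})"
      unfolding has_real_derivative_iff_has_vector_derivative[symmetric]
      by (rule has_field_derivative_at_within[OF assms])
  qed simp
  then show ?thesis by (rule integral_unique)
qed

lemma X1_J: assumes a: "a > 0" and b: "b > 0" shows "X1 a b = J 0 1 a b"
proof -
  have s1: "sqrt (b/a) ^ 2 = b / a" using a b by simp
  have s2: "sqrt (b/a) * a = sqrt (a*b)"
  proof -
    have "sqrt (b/a) * a = sqrt (b/a) * sqrt (a^2)" using a by simp
    also have "\<dots> = sqrt (b/a * a^2)" by (simp only: real_sqrt_mult)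
    also have "b/a * a^2 = a*b" using a by (simp add: power2_eq_square)
    finally show ?thesis .
  qed
  have sab: "sqrt (a*b) > 0" using a b by simp
  have "J 0 1 a b = integral {0..1} (\<lambda>t. 1 / (a + t^2*b))" by (simp add: J_def)
  also have "\<dots> = arctan (1 * sqrt (b/a)) / sqrt (a*b) - arctan (0 * sqrt (b/a)) / sqrt (a*b)"
  proof (rule ftc01)
    fix x :: real
    have d: "a + x^2*b > 0" using a b by (simp add: add_pos_nonneg)
    have c1: "((\<lambda>t. t * sqrt (b/a)) has_real_derivative sqrt (b/a)) (at x)"
      by (intro derivative_eq_intros) auto
    have "((\<lambda>t. arctan (t * sqrt (b/a)) / sqrt (a*b)) has_real_derivative
        (inverse (1 + (x * sqrt (b/a))^2) * sqrt (b/a)) / sqrt (a*b)) (at x)"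
      by (intro DERIV_cdivide DERIV_chain2[OF DERIV_arctan c1])
    moreover have "(inverse (1 + (x * sqrt (b/a))^2) * sqrt (b/a)) / sqrt (a*b) = 1 / (a + x^2*b)"
    proof -
      have e1: "1 + (x * sqrt (b/a))^2 = (a + x^2*b)/a" using a by (simp add: power_mult_distrib s1 field_simps)
      have e2: "sqrt (b/a) / sqrt (a*b) = 1/a" using s2 a b sab by (simp add: field_simps)
      have "(inverse (1 + (x * sqrt (b/a))^2) * sqrt (b/a)) / sqrt (a*b) = inverse ((a + x^2*b)/a) * (1/a)"
        by (simp only: e1 e2 times_divide_eq_right[symmetric] mult_1_right)
      also have "\<dots> = 1 / (a + x^2*b)" using a d by (simp add: field_simps)
      finally show ?thesis .
    qed
    ultimately show "((\<lambda>t. arctan (t * sqrt (b/a)) / sqrt (a*b)) has_real_derivative 1 / (a + x^2*b)) (at x)"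
      by simp
  qed
  also have "\<dots> = X1 a b" by (simp add: X1_def)
  finally show ?thesis by simp
qed

lemma X2_J: assumes a: "a > 0" and b: "b > 0" shows "X2 a b = J 1 2 a b"
proof -
  have "J 1 2 a b = integral {0..1} (\<lambda>t. t / (a + t^2*b)^2)" by (simp add: J_def)
  also have "\<dots> = (- 1 / (2*b*(a + 1^2*b))) - (- 1 / (2*b*(a + 0^2*b)))"
  proof (rule ftc01)
    fix x :: real
    have d: "a + x^2*b > 0" using a b by (simp add: add_pos_nonneg)
    have eqD: "x / ((a + x^2*b) * (a + x^2*b)) = 4 * (b * (x * b)) / (2 * b * (a + x^2*b))^2"
    proof -
      have "\<And>D. D > 0 \<Longrightarrow> x / (D * D) = 4 * (b * (x * b)) / (2 * b * D)^2"
        using b by (simp add: power_mult_distrib field_simps power2_eq_square)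
      then show ?thesis using d by blast
    qed
    show "((\<lambda>t. - 1 / (2*b*(a + t^2*b))) has_real_derivative x / (a + x^2*b)^2) (at x)"
      using d b eqD by (intro derivative_eq_intros refl) (auto simp: power2_eq_square)
  qed
  also have "\<dots> = X2 a b"
  proof -
    have "a + b > 0" using a b by simp
    have g: "1/(2*b*a) - 1/(2*b*c) = 1/(2*a*c)" if "c > 0" "c - a = b" for c
    proof -
      have "1/(2*b*a) - 1/(2*b*c) = (c - a)/(2*b*a*c)" using that(1) a b by (simp add: field_simps)
      also have "\<dots> = 1/(2*a*c)" by (subst that(2)) (use that(1) a b in \<open>simp add: field_simps\<close>)
      finally show ?thesis .
    qed
    have "(- 1 / (2*b*(a + 1^2*b))) - (- 1 / (2*b*(a + 0^2*b))) = 1/(2*b*a) - 1/(2*b*(a+b))" by simp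
    also have "\<dots> = 1/(2*a*(a+b))" using g[of "a+b"] \<open>a + b > 0\<close> by simp
    finally show ?thesis by (simp add: X2_def)
  qed
  finally show ?thesis by simp
qed

lemma Xn_J: assumes a: "a > 0" and b: "b > 0" and n: "n \<ge> 1"
  shows "Xn n a b = fact (n - 1) * J (n - 1) n a b"
proof (cases "odd n")
  case True
  then obtain k where k: "n = 2*k + 1" by (auto elim: oddE)
  have B: "(pdb ^^ k) X1 a b = (-1)^k * fact k * J (2*k) (Suc k) a b" if "a > 0" "b > 0" for a b
    using iter_b[of X1 1 0 0 a b k] X1_J that by simp
  have "(pda ^^ k) ((pdb ^^ k) X1) a b = (-1)^k * fact k * (-1)^k * fact (k + k) / fact k * J (2*k) (Suc k + k) a b"
    using iter_a[of "(pdb ^^ k) X1" "(-1)^k * fact k" "2*k" k, OF B] a b by simp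
  also have "\<dots> = fact (2*k) * J (2*k) (2*k+1) a b"
  proof -
    have "((-1::real)^k)*((-1)^k) = 1" by (simp flip: power_mult_distrib)
    moreover have "k + k = 2*k" by simp
    ultimately show ?thesis by (simp only: mult.assoc mult.left_commute[of "(-1)^k"]) (simp add: mult_2[symmetric])
  qed
  finally show ?thesis using True k by (simp add: Xn_def)
next
  case False
  then obtain j where j: "n = 2*j" by (auto elim: evenE)
  with n have "j \<ge> 1" by simp
  then obtain k where "j = Suc k" by (cases j) auto
  with j have k: "n = 2*k + 2" by simp
  have B: "(pdb ^^ k) X2 a b = (-1)^k * fact (Suc k) * J (1 + 2*k) (Suc (Suc k)) a b" if "a > 0" "b > 0" for a b
    using iter_b[of X2 1 1 1 a b k] X2_J that by (simp add: numeral_2_eq_2)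
  have "(pda ^^ k) ((pdb ^^ k) X2) a b = (-1)^k * fact (Suc k) * (-1)^k * fact (Suc k + k) / fact (Suc k) * J (1 + 2*k) (Suc (Suc k) + k) a b"
    using iter_a[of "(pdb ^^ k) X2" "(-1)^k * fact (Suc k)" "1 + 2*k" "Suc k", OF B] a b by simp
  also have "\<dots> = fact (2*k+1) * J (2*k+1) (2*k+2) a b"
  proof -
    have "((-1::real)^k)*((-1)^k) = 1" by (simp flip: power_mult_distrib)
    moreover have "k + k = 2*k" by simp
    ultimately show ?thesis by (simp only: mult.assoc mult.left_commute[of "(-1)^k"]) (simp add: mult_2[symmetric])
  qed
  finally show ?thesis using False k by (simp add: Xn_def)
qed

lemma quot_deriv:
  assumes N: "(N has_real_derivative N') (at x)" and g: "(g has_real_derivative g') (at x)" and pos: "g x > 0"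
  shows "((\<lambda>s. N s / g s ^ q) has_real_derivative (N' / g x ^ q - real q * N x * g' / g x ^ Suc q)) (at x)"
proof -
  have "((\<lambda>s. N s * (1 / g s ^ q)) has_real_derivative (N' * (1 / g x ^ q) + (- real q * 1 * g' / g x ^ Suc q) * N x)) (at x)"
    by (rule DERIV_mult[OF N pow_div_deriv[OF g pos]])
  then show ?thesis by (simp add: field_simps)
qed

lemma J_cont0: "(a::real) > 0 \<Longrightarrow> b > 0 \<Longrightarrow> (\<lambda>t. t^p / (a + t^2*b)^q) integrable_on cbox 0 1"
  by (intro integrable_continuous continuous_intros) (auto dest: den_ne)

lemma J_cont: "(a::real) > 0 \<Longrightarrow> b > 0 \<Longrightarrow> (\<lambda>t. t^p / (a + t^2*b)^q) integrable_on {0..1}"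
  using J_cont0 by (simp add: cbox_interval)

lemma J_rec:
  assumes a: "a > 0" and b: "b > 0"
  shows "4*a*b*real (k+2) * J (k+2) (k+3) a b = real (k+1) * J k (k+1) a b + (b - a) / (a + b)^(k+2)"
proof -
  define f where "f t = 4*a*b*real (k+2) * (t^(k+2) / (a + t^2*b)^(k+3)) - real (k+1) * (t^k / (a + t^2*b)^(k+1))" for t
  define F where "F t = t^(k+1) * (b*t^2 - a) / (a + t^2*b)^(k+2)" for t
  have "integral {0..1} f = F 1 - F 0"
  proof (rule ftc01)
    fix t :: real
    define D where "D = a + t^2*b"
    have D: "D > 0" using a b by (simp add: D_def add_pos_nonneg)
    have d1: "((\<lambda>u. u^(k+1) * (b*u^2 - a)) has_real_derivative
        (real (k+1) * t^k * (b*t^2 - a) + t^(k+1) * (2*b*t))) (at t)"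
    proof -
      have tp: "t * (real n * t ^ (n - Suc 0)) = real n * t ^ n" for n by (cases n) auto
      show ?thesis
        by (auto intro!: derivative_eq_intros simp: algebra_simps power2_eq_square tp)
    qed
    have d2: "((\<lambda>u. a + u^2*b) has_real_derivative 2*b*t) (at t)"
      by (auto intro!: derivative_eq_intros simp: algebra_simps)
    have "(F has_real_derivative ((real (k+1) * t^k * (b*t^2 - a) + t^(k+1) * (2*b*t)) / D^(k+2)
        - real (k+2) * (t^(k+1) * (b*t^2 - a)) * (2*b*t) / D^Suc (k+2))) (at t)"
      unfolding F_def D_def by (rule quot_deriv[OF d1 d2]) (use D in \<open>simp add: D_def\<close>)
    moreover have "(real (k+1) * t^k * (b*t^2 - a) + t^(k+1) * (2*b*t)) / D^(k+2)
        - real (k+2) * (t^(k+1) * (b*t^2 - a)) * (2*b*t) / D^Suc (k+2) = f t"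
    proof -
      define P where "P = t^k"
      define E where "E = D^(k+1)"
      have E: "E > 0" using D by (simp add: E_def)
      have pw: "t^(k+1) = P*t" "t^(k+2) = P*t^2" "D^(k+2) = E*D" "D^Suc (k+2) = E*D*D" "D^(k+3) = E*D*D"
        by (simp_all add: P_def E_def power_add power2_eq_square power3_eq_cube)
      have poly: "((real (k+1) * P * (b*t^2 - a) + P*t * (2*b*t)) * D - real (k+2) * (P*t * (b*t^2 - a)) * (2*b*t))
          = 4*a*b*real (k+2) * (P*t^2) - real (k+1) * P * (D*D)"
        unfolding D_def by (simp add: algebra_simps power2_eq_square)
      have l: "(real (k+1) * P * (b*t^2 - a) + P*t * (2*b*t)) / (E*D) - real (k+2) * (P*t * (b*t^2 - a)) * (2*b*t) / (E*D*D)
          = ((real (k+1) * P * (b*t^2 - a) + P*t * (2*b*t)) * D - real (k+2) * (P*t * (b*t^2 - a)) * (2*b*t)) / (E*D*D)"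
        using D E by (simp add: field_simps)
      have r: "4*a*b*real (k+2) * ((P*t^2) / (E*D*D)) - real (k+1) * (P / E)
          = (4*a*b*real (k+2) * (P*t^2) - real (k+1) * P * (D*D)) / (E*D*D)"
        using D E by (simp add: field_simps)
      show ?thesis unfolding f_def pw D_def[symmetric] E_def[symmetric] P_def[symmetric]
        using l r poly by simp
    qed
    ultimately show "(F has_real_derivative f t) (at t)" by simp
  qed
  moreover have "integral {0..1} f = 4*a*b*real (k+2) * J (k+2) (k+3) a b - real (k+1) * J k (k+1) a b"
  proof -
    have i1: "(\<lambda>t. 4*a*b*real (k+2) * (t^(k+2) / (a + t^2*b)^(k+3))) integrable_on {0..1}"
      using integrable_on_cmult_left[OF J_cont[OF a b, of "k+2" "k+3"], of "4*a*b*real (k+2)"] by simp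
    have i2: "(\<lambda>t. real (k+1) * (t^k / (a + t^2*b)^(k+1))) integrable_on {0..1}"
      using integrable_on_cmult_left[OF J_cont[OF a b, of "k" "k+1"], of "real (k+1)"] by simp
    have "integral {0..1} f = integral {0..1} (\<lambda>t. 4*a*b*real (k+2) * (t^(k+2) / (a + t^2*b)^(k+3)))
       - integral {0..1} (\<lambda>t. real (k+1) * (t^k / (a + t^2*b)^(k+1)))"
      unfolding f_def by (rule integral_diff[OF i1 i2])
    then show ?thesis by (simp only: integral_mult_right J_def)
  qed
  moreover have "F 1 - F 0 = (b - a) / (a + b)^(k+2)" by (simp add: F_def)
  ultimately show ?thesis by simp
qed

lemma alg_step:
  fixes u v c e w p q d S J0 J1 :: real
  assumes pos: "u > 0" "v > 0" "c > 0" "e > 0" "w > 0" "p > 0" "q > 0"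
    and IH: "J0 = u / (v * e) * S"
    and rec: "c * q * J1 = p * J0 + d / w"
  shows "J1 = (p * u) / (q * v * (e * c)) * (S + v * d * e / (p * u * w))"
proof -
  have nz: "c * q \<noteq> 0" using pos by simp
  have "J1 = (p * J0 + d / w) / (c * q)" using rec nz by (simp add: eq_divide_eq mult_ac)
  also have "\<dots> = (p * u) / (q * v * (e * c)) * (S + v * d * e / (p * u * w))"
    unfolding IH using pos by (simp add: field_simps)
  finally show ?thesis .
qed

lemma dfact_step: "k > 0 \<Longrightarrow> dfact k = nat k * dfact (k - 2)"
  by (subst dfact.simps) simp

lemma dfact_pos: "dfact k > 0"
proof (induction k rule: dfact.induct)
  case (1 k)
  then show ?case by (subst dfact.simps) simp
qed

lemma dfact_le0: "k \<le> 0 \<Longrightarrow> dfact k = 1"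
  by (subst dfact.simps) simp

lemma dfact_odd_step: "real (dfact (2 * int (Suc k) - 1)) = real (2*k+1) * real (dfact (2 * int k - 1))"
proof -
  have "dfact (2 * int (Suc k) - 1) = nat (2 * int (Suc k) - 1) * dfact (2 * int (Suc k) - 1 - 2)"
    by (rule dfact_step) simp
  moreover have "2 * int (Suc k) - 1 - 2 = 2 * int k - 1" by simp
  moreover have "nat (2 * int (Suc k) - 1) = 2*k+1" by simp
  ultimately show ?thesis by (simp only: of_nat_mult)
qed

lemma dfact_even_step: "real (dfact (2 * int (Suc k))) = real (2*k+2) * real (dfact (2 * int k))"
proof -
  have "dfact (2 * int (Suc k)) = nat (2 * int (Suc k)) * dfact (2 * int (Suc k) - 2)"
    by (rule dfact_step) simp
  moreover have "2 * int (Suc k) - 2 = 2 * int k" by simp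
  moreover have "nat (2 * int (Suc k)) = 2*k+2" by simp
  ultimately show ?thesis by (simp only: of_nat_mult)
qed

lemma dfact_odd_step': "real (dfact (2 * int (Suc k) + 1)) = real (2*k+3) * real (dfact (2 * int k + 1))"
proof -
  have "dfact (2 * int (Suc k) + 1) = nat (2 * int (Suc k) + 1) * dfact (2 * int (Suc k) + 1 - 2)"
    by (rule dfact_step) simp
  moreover have "2 * int (Suc k) + 1 - 2 = 2 * int k + 1" by simp
  moreover have "nat (2 * int (Suc k) + 1) = 2*k+3" by simp
  ultimately show ?thesis by (simp only: of_nat_mult)
qed

definition Todd :: "real \<Rightarrow> real \<Rightarrow> nat \<Rightarrow> real" where
  "Todd a b j = real (dfact (2 * int j - 2)) * (b - a) * (4*a*b)^(j - 1)
          / (real (dfact (2 * int j - 1)) * (a + b)^(2*j))"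

definition Teven :: "real \<Rightarrow> real \<Rightarrow> nat \<Rightarrow> real" where
  "Teven a b j = real (dfact (2 * int j - 3)) * (b - a) * (4*a*b)^(j - 2)
          / (real (dfact (2 * int j - 2)) * (a + b)^(2*j - 1))"

lemma odd_closed:
  assumes a: "a > 0" and b: "b > 0"
  shows "J (2*k) (2*k+1) a b = real (dfact (2 * int k - 1)) / (real (dfact (2 * int k)) * (4*a*b)^k)
    * (X1 a b + (\<Sum>j = 1..k. Todd a b j))"
proof (induction k)
  case 0
  then show ?case using X1_J[OF a b] by (simp add: dfact_le0)
next
  case (Suc k)
  let ?S = "X1 a b + (\<Sum>j = 1..k. Todd a b j)"
  let ?u = "real (dfact (2 * int k - 1))" and ?v = "real (dfact (2 * int k))"
  have pos: "?u > 0" "?v > 0" "4*a*b > 0" "(4*a*b)^k > 0" "(a+b)^(2*k+2) > 0" "real (2*k+1) > 0" "real (2*k+2) > 0"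
    using dfact_pos a b by simp_all
  have e: "2*k+2 = 2*k+2" "2*k+3 = 2*k+3" "2*k+1 = 2*k+1" by simp_all
  have rec: "(4*a*b) * real (2*k+2) * J (2*k+2) (2*k+3) a b = real (2*k+1) * J (2*k) (2*k+1) a b + (b - a) / (a+b)^(2*k+2)"
    using J_rec[OF a b, of "2*k"] by (simp only: mult.assoc)
  have main: "J (2*k+2) (2*k+3) a b = (real (2*k+1) * ?u) / (real (2*k+2) * ?v * ((4*a*b)^k * (4*a*b)))
      * (?S + ?v * (b - a) * (4*a*b)^k / (real (2*k+1) * ?u * (a+b)^(2*k+2)))"
    by (rule alg_step[OF pos Suc.IH rec])
  have t: "Todd a b (Suc k) = ?v * (b - a) * (4*a*b)^k / (real (2*k+1) * ?u * (a+b)^(2*k+2))"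
  proof -
    have h: "2 * int (Suc k) - 2 = 2 * int k" "2 * Suc k = 2*k+2" by simp_all
    show ?thesis unfolding Todd_def dfact_odd_step h diff_Suc_1 by (simp only: mult_ac)
  qed
  have sm: "(\<Sum>j = 1..Suc k. Todd a b j) = (\<Sum>j = 1..k. Todd a b j) + Todd a b (Suc k)" by simp
  have h2: "2 * Suc k = 2*k+2" "2*k+2+1 = 2*k+3" by simp_all
  show ?case
    unfolding sm t h2 dfact_odd_step dfact_even_step power_Suc main by (simp only: mult_ac add_ac)
qed

lemma even_closed:
  assumes a: "a > 0" and b: "b > 0"
  shows "J (2*k+1) (2*k+2) a b = real (dfact (2 * int k)) / (real (dfact (2 * int k + 1)) * (4*a*b)^k)
    * (X2 a b + (\<Sum>j = 2..k+1. Teven a b j))"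
proof (induction k)
  case 0
  have "dfact 1 = 1" by (simp add: dfact_step[of 1] dfact_le0)
  then show ?case using X2_J[OF a b] by (simp add: dfact_le0 numeral_2_eq_2)
next
  case (Suc k)
  let ?S = "X2 a b + (\<Sum>j = 2..k+1. Teven a b j)"
  let ?u = "real (dfact (2 * int k))" and ?v = "real (dfact (2 * int k + 1))"
  have pos: "?u > 0" "?v > 0" "4*a*b > 0" "(4*a*b)^k > 0" "(a+b)^(2*k+3) > 0" "real (2*k+2) > 0" "real (2*k+3) > 0"
    using dfact_pos a b by simp_all
  have e: "2*k+1+2 = 2*k+3" "2*k+1+3 = 2*k+4" "2*k+1+1 = 2*k+2" by simp_all
  have rec: "(4*a*b) * real (2*k+3) * J (2*k+3) (2*k+4) a b = real (2*k+2) * J (2*k+1) (2*k+2) a b + (b - a) / (a+b)^(2*k+3)"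
    using J_rec[OF a b, of "2*k+1"] by (simp only: mult.assoc e)
  have main: "J (2*k+3) (2*k+4) a b = (real (2*k+2) * ?u) / (real (2*k+3) * ?v * ((4*a*b)^k * (4*a*b)))
      * (?S + ?v * (b - a) * (4*a*b)^k / (real (2*k+2) * ?u * (a+b)^(2*k+3)))"
    by (rule alg_step[OF pos Suc.IH rec])
  have t: "Teven a b (Suc k + 1) = ?v * (b - a) * (4*a*b)^k / (real (2*k+2) * ?u * (a+b)^(2*k+3))"
  proof -
    have "2 * int (Suc k + 1) - 3 = 2 * int k + 1" "2 * int (Suc k + 1) - 2 = 2 * int (Suc k)" "2*(Suc k + 1) - 1 = 2*k+3"
      "Suc k + 1 - 2 = k" by simp_all
    note h = this
    show ?thesis unfolding Teven_def h dfact_even_step by (simp only: mult_ac)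
  qed
  have sm: "(\<Sum>j = 2..Suc k + 1. Teven a b j) = (\<Sum>j = 2..k+1. Teven a b j) + Teven a b (Suc k + 1)" by simp
  have h2: "2 * Suc k + 1 = 2*k+3" "2 * Suc k + 2 = 2*k+4" by simp_all
  show ?case
    unfolding sm t h2 dfact_odd_step' dfact_even_step power_Suc main by (simp only: mult_ac add_ac)
qed

lemma fint_J: "fint n r y = 2^n * J (n - 1) n (r - y) (r + y)"
proof -
  have "(\<lambda>t. 2 ^ n * t ^ (n - 1) / (r - y + t\<^sup>2 * (r + y)) ^ n) = (\<lambda>t. 2 ^ n * (t ^ (n - 1) / (r - y + t\<^sup>2 * (r + y)) ^ n))"
    by auto
  then show ?thesis unfolding fint_def J_def by (simp only: integral_mult_right)
qed

lemma fodd: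
  assumes ry: "r > \<bar>y\<bar>"
  shows "fint (2*k+1) r y = real (dfact (2 * int k - 1)) / (real (dfact (2 * int k)) * (r\<^sup>2 - y\<^sup>2)^k)
    * (2 * arctan (sqrt ((r + y) / (r - y))) / sqrt (r\<^sup>2 - y\<^sup>2)
       + (\<Sum>j = 1..k. real (dfact (2 * int j - 2)) * y * (r\<^sup>2 - y\<^sup>2)^(j - 1) / (real (dfact (2 * int j - 1)) * r^(2*j))))"
proof -
  define a where "a = r - y"
  define b where "b = r + y"
  define c where "c = r\<^sup>2 - y\<^sup>2"
  have a: "a > 0" and b: "b > 0" and r: "r > 0" using ry by (auto simp: a_def b_def)
  have ab: "a * b = c" by (simp add: a_def b_def c_def algebra_simps power2_eq_square)
  have c: "c > 0" using a b ab by (metis mult_pos_pos)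
  have apb: "a + b = 2 * r" and bma: "b - a = 2 * y" by (simp_all add: a_def b_def)
  let ?u = "real (dfact (2 * int k - 1))" and ?v = "real (dfact (2 * int k))"
  have uv: "?u > 0" "?v > 0" using dfact_pos by simp_all
  let ?S = "X1 a b + (\<Sum>j = 1..k. Todd a b j)"
  have "fint (2*k+1) r y = 2^(2*k+1) * J (2*k) (2*k+1) a b" by (simp add: fint_J a_def b_def)
  also have "\<dots> = 2^(2*k+1) * (?u / (?v * (4*a*b)^k) * ?S)" by (simp only: odd_closed[OF a b])
  also have "\<dots> = ?u / (?v * c^k) * (2 * ?S)"
  proof -
    have e1: "(4*a*b)^k = 4^k * c^k" using ab by (simp add: power_mult_distrib mult.assoc)
    have e2: "(2::real)^(2*k+1) = 2 * 4^k" by (simp add: power_mult)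
    have g: "2*Q * (u/(V*(Q*C)) * S) = u/(V*C) * (2*S)" if "Q > 0" "C > 0" "V > 0" for Q C V u S :: real
      using that by (simp add: field_simps)
    show ?thesis unfolding e1 e2 mult.assoc[symmetric, of 2 "4^k"] by (rule g) (use uv c in simp_all)
  qed
  also have "2 * ?S = 2 * arctan (sqrt ((r + y) / (r - y))) / sqrt (r\<^sup>2 - y\<^sup>2)
       + (\<Sum>j = 1..k. real (dfact (2 * int j - 2)) * y * (r\<^sup>2 - y\<^sup>2)^(j - 1) / (real (dfact (2 * int j - 1)) * r^(2*j)))"
  proof -
    have X: "2 * X1 a b = 2 * arctan (sqrt ((r + y) / (r - y))) / sqrt (r\<^sup>2 - y\<^sup>2)"
      unfolding X1_def ab by (simp add: a_def b_def c_def)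
    have T: "2 * Todd a b j = real (dfact (2 * int j - 2)) * y * (r\<^sup>2 - y\<^sup>2)^(j - 1) / (real (dfact (2 * int j - 1)) * r^(2*j))"
      if j: "j \<in> {1..k}" for j
    proof -
      obtain i where i: "j = Suc i" using j by (cases j) auto
      have d1: "real (dfact (2 * int j - 1)) > 0" using dfact_pos by simp
      have p1: "(4*c)^(j-1) = 4^i * c^i" by (simp add: i power_mult_distrib)
      have p2: "(2*r)^(2*j) = 4 * 4^i * r^(2*j)" by (simp add: i power_mult_distrib power_mult)
      show ?thesis unfolding Todd_def apb bma mult.assoc[of 4 a b] ab p1 p2
        using d1 r by (simp add: i c_def field_simps)
    qed
    have "2 * (\<Sum>j = 1..k. Todd a b j) = (\<Sum>j = 1..k. 2 * Todd a b j)" by (simp add: sum_distrib_left)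
    also have "\<dots> = (\<Sum>j = 1..k. real (dfact (2 * int j - 2)) * y * (r\<^sup>2 - y\<^sup>2)^(j - 1) / (real (dfact (2 * int j - 1)) * r^(2*j)))"
      by (rule sum.cong[OF refl T])
    finally show ?thesis using X by (simp add: distrib_left)
  qed
  finally show ?thesis by (simp add: c_def)
qed

lemma feven:
  assumes ry: "r > \<bar>y\<bar>"
  shows "fint (2*k+2) r y = real (dfact (2 * int k)) / (real (dfact (2 * int k + 1)) * (r\<^sup>2 - y\<^sup>2)^(k+1))
    * (1 + (\<Sum>j = 1..k+1. real (dfact (2 * int j - 3)) * y * (r\<^sup>2 - y\<^sup>2)^(j - 1) / (real (dfact (2 * int j - 2)) * r^(2*j - 1))))"
proof -
  define a where "a = r - y"
  define b where "b = r + y"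
  define c where "c = r\<^sup>2 - y\<^sup>2"
  have a: "a > 0" and b: "b > 0" and r: "r > 0" using ry by (auto simp: a_def b_def)
  have ab: "a * b = c" by (simp add: a_def b_def c_def algebra_simps power2_eq_square)
  have c: "c > 0" using a b ab by (metis mult_pos_pos)
  have apb: "a + b = 2 * r" and bma: "b - a = 2 * y" by (simp_all add: a_def b_def)
  let ?u = "real (dfact (2 * int k))" and ?v = "real (dfact (2 * int k + 1))"
  have uv: "?u > 0" "?v > 0" using dfact_pos by simp_all
  let ?S = "X2 a b + (\<Sum>j = 2..k+1. Teven a b j)"
  define E where "E j = real (dfact (2 * int j - 3)) * y * (r\<^sup>2 - y\<^sup>2)^(j - 1) / (real (dfact (2 * int j - 2)) * r^(2*j - 1))" for j
  have "fint (2*k+2) r y = 2^(2*k+2) * J (2*k+1) (2*k+2) a b" by (simp add: fint_J a_def b_def)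
  also have "\<dots> = 2^(2*k+2) * (?u / (?v * (4*a*b)^k) * ?S)" by (simp only: even_closed[OF a b])
  also have "\<dots> = ?u / (?v * c^(k+1)) * (4 * c * ?S)"
  proof -
    have e1: "(4*a*b)^k = 4^k * c^k" using ab by (simp add: power_mult_distrib mult.assoc)
    have e2: "(2::real)^(2*k+2) = 4 * 4^k" by (simp add: power_mult)
    have e3: "c^(k+1) = c^k * c" by simp
    have g: "4*Q * (u/(V*(Q*C)) * S) = u/(V*(C*c)) * (4*c*S)" if "Q > 0" "C > 0" "V > 0" for Q C V u S :: real
      using that c by (simp add: field_simps)
    show ?thesis unfolding e1 e2 e3 mult.assoc[symmetric, of 4 "4^k"] by (rule g) (use uv c in simp_all)
  qed
  also have "4 * c * ?S = 1 + (\<Sum>j = 1..k+1. E j)"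
  proof -
    have X: "4 * c * X2 a b = 1 + E 1"
    proof -
      have "4 * c * X2 a b = b / r" unfolding X2_def ab[symmetric] apb using a r by (simp add: field_simps)
      also have "\<dots> = 1 + y / r" using r by (simp add: b_def field_simps)
      also have "y / r = E 1" by (simp add: E_def dfact_le0)
      finally show ?thesis .
    qed
    have T: "4 * c * Teven a b j = E j" if j: "j \<in> {2..k+1}" for j
    proof -
      obtain i where i: "j = i + 2" using j by (metis atLeastAtMost_iff le_add_diff_inverse2)
      have d1: "real (dfact (2 * int j - 2)) > 0" using dfact_pos by simp
      have p1: "(4*c)^(j-2) = 4^i * c^i" by (simp add: i power_mult_distrib)
      have p2: "(2*r)^(2*j - 1) = 8 * 4^i * r^(2*j - 1)"
      proof -
        have "2*j - 1 = 2*i + 3" using i by simp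
        then show ?thesis by (simp add: power_mult_distrib power_add power_mult)
      qed
      have p3: "c^(j - 1) = c * c^i" by (simp add: i)
      show ?thesis unfolding Teven_def E_def apb bma mult.assoc[of 4 a b] ab p1 p2 c_def[symmetric] p3
        using d1 r by (simp add: field_simps)
    qed
    have "4 * c * (\<Sum>j = 2..k+1. Teven a b j) = (\<Sum>j = 2..k+1. 4 * c * Teven a b j)" by (rule sum_distrib_left)
    also have "\<dots> = (\<Sum>j = 2..k+1. E j)" by (rule sum.cong[OF refl T])
    finally have "4 * c * ?S = 1 + (E 1 + (\<Sum>j = 2..k+1. E j))" using X by (simp add: distrib_left)
    also have "E 1 + (\<Sum>j = 2..k+1. E j) = (\<Sum>j = 1..k+1. E j)"
      by (subst sum.atLeast_Suc_atMost[of 1 "k+1"]) (simp_all add: numeral_2_eq_2)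
    finally show ?thesis .
  qed
  finally show ?thesis by (simp add: c_def E_def)
qed

theorem mainTheorem2:
  fixes n :: nat and a b :: real
  assumes "n \<ge> 1" and "a > 0" and "b > 0"
  shows
   "(\<forall>m::nat. m \<ge> 1 \<and> n = 2*m - 1 \<longrightarrow>
      Xn n a b =
        fact (2*m - 2) * real (dfact (2 * int m - 3))
          / (real (dfact (2 * int m - 2)) * (2^2 * a * b) ^ (m - 1))
        * (arctan (sqrt (b / a)) / sqrt (a * b)
           + (\<Sum>k = 1..m - 1. real (dfact (2 * int k - 2)) * (b - a) * (2^2 * a * b) ^ (k - 1)
                / (real (dfact (2 * int k - 1)) * (a + b) ^ (2*k)))))
  \<and> (\<forall>m::nat. m \<ge> 2 \<and> n = 2*m - 2 \<longrightarrow>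
      Xn n a b =
        fact (2*m - 3) * real (dfact (2 * int m - 4))
          / (real (dfact (2 * int m - 3)) * (2^2 * a * b) ^ (m - 2))
        * (1 / (2 * a * (a + b))
           + (\<Sum>k = 2..m - 1. real (dfact (2 * int k - 3)) * (b - a) * (2^2 * a * b) ^ (k - 2)
                / (real (dfact (2 * int k - 2)) * (a + b) ^ (2*k - 1)))))
  \<and> (\<forall>(x :: nat \<Rightarrow> real) (r :: real).
      r = sqrt (\<Sum>j = 1..n + 1. (x j)\<^sup>2) \<and> r > \<bar>x (n + 1)\<bar> \<longrightarrow>
      (\<forall>m::nat. m \<ge> 1 \<and> n = 2*m - 1 \<longrightarrow>
         fint n r (x (n + 1)) =
           real (dfact (2 * int m - 3))
             / (real (dfact (2 * int m - 2)) * (r\<^sup>2 - (x (2*m))\<^sup>2) ^ (m - 1))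
           * (2 * arctan (sqrt ((r + x (2*m)) / (r - x (2*m)))) / sqrt (r\<^sup>2 - (x (2*m))\<^sup>2)
              + (\<Sum>k = 1..m - 1. real (dfact (2 * int k - 2)) * x (2*m) * (r\<^sup>2 - (x (2*m))\<^sup>2) ^ (k - 1)
                   / (real (dfact (2 * int k - 1)) * r ^ (2*k)))))
      \<and> (\<forall>m::nat. m \<ge> 2 \<and> n = 2*m - 2 \<longrightarrow>
         fint n r (x (n + 1)) =
           real (dfact (2 * int m - 4))
             / (real (dfact (2 * int m - 3)) * (r\<^sup>2 - (x (2*m - 1))\<^sup>2) ^ (m - 1))
           * (1 + (\<Sum>k = 1..m - 1. real (dfact (2 * int k - 3)) * x (2*m - 1) * (r\<^sup>2 - (x (2*m - 1))\<^sup>2) ^ (k - 1)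
                   / (real (dfact (2 * int k - 2)) * r ^ (2*k - 1))))))"
proof (intro conjI allI impI)
  fix m :: nat assume hm: "m \<ge> 1 \<and> n = 2*m - 1"
  then obtain k where mk: "m = Suc k" by (cases m) auto
  have e: "2*Suc k - 2 = 2*k" "2*int (Suc k) - 3 = 2*int k - 1" "2*int (Suc k) - 2 = 2*int k" "Suc k - 1 = k"
    "(2::real)^2 = 4" by simp_all
  have nk: "n = 2*k+1" and nk1: "n - 1 = 2*k" using hm mk by simp_all
  note oc = odd_closed[OF assms(2,3), of k, unfolded Todd_def X1_def]
  have "Xn n a b = fact (2*k) * J (2*k) (2*k+1) a b"
    using Xn_J[OF assms(2,3,1)] unfolding nk1 by (simp add: nk)
  then show "Xn n a b =
        fact (2*m - 2) * real (dfact (2 * int m - 3))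
          / (real (dfact (2 * int m - 2)) * (2^2 * a * b) ^ (m - 1))
        * (arctan (sqrt (b / a)) / sqrt (a * b)
           + (\<Sum>k = 1..m - 1. real (dfact (2 * int k - 2)) * (b - a) * (2^2 * a * b) ^ (k - 1)
                / (real (dfact (2 * int k - 1)) * (a + b) ^ (2*k))))"
    unfolding mk e oc by (simp only: times_divide_eq_right times_divide_eq_left mult.assoc)
next
  fix m :: nat assume hm: "m \<ge> 2 \<and> n = 2*m - 2"
  then obtain k where mk: "m = Suc (Suc k)" by (metis add_2_eq_Suc le_Suc_ex)
  have e: "2*Suc (Suc k) - 3 = 2*k+1" "2*int (Suc (Suc k)) - 4 = 2*int k" "2*int (Suc (Suc k)) - 3 = 2*int k + 1"
    "Suc (Suc k) - 2 = k" "Suc (Suc k) - 1 = k + 1" "(2::real)^2 = 4" by simp_all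
  have nk: "n = 2*k+2" and nk1: "n - 1 = 2*k+1" using hm mk by simp_all
  note ec = even_closed[OF assms(2,3), of k, unfolded Teven_def X2_def]
  have "Xn n a b = fact (2*k+1) * J (2*k+1) (2*k+2) a b"
    using Xn_J[OF assms(2,3,1)] unfolding nk1 by (simp add: nk)
  then show "Xn n a b =
        fact (2*m - 3) * real (dfact (2 * int m - 4))
          / (real (dfact (2 * int m - 3)) * (2^2 * a * b) ^ (m - 2))
        * (1 / (2 * a * (a + b))
           + (\<Sum>k = 2..m - 1. real (dfact (2 * int k - 3)) * (b - a) * (2^2 * a * b) ^ (k - 2)
                / (real (dfact (2 * int k - 2)) * (a + b) ^ (2*k - 1))))"
    unfolding mk e ec by (simp only: times_divide_eq_right times_divide_eq_left mult.assoc)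
next
  fix x :: "nat \<Rightarrow> real" and r :: real
  assume hr: "r = sqrt (\<Sum>j = 1..n + 1. (x j)\<^sup>2) \<and> r > \<bar>x (n + 1)\<bar>"
    fix m :: nat assume hm: "m \<ge> 1 \<and> n = 2*m - 1"
    then obtain k where mk: "m = Suc k" by (cases m) auto
    have nk: "n = 2*k+1" and n1: "n + 1 = 2 * m" using hm mk by simp_all
    have ry: "r > \<bar>x (2*m)\<bar>" using hr n1 by simp
    have e: "2*int (Suc k) - 3 = 2*int k - 1" "2*int (Suc k) - 2 = 2*int k" "Suc k - 1 = k" by simp_all
    show "fint n r (x (n + 1)) =
           real (dfact (2 * int m - 3))
             / (real (dfact (2 * int m - 2)) * (r\<^sup>2 - (x (2*m))\<^sup>2) ^ (m - 1))
           * (2 * arctan (sqrt ((r + x (2*m)) / (r - x (2*m)))) / sqrt (r\<^sup>2 - (x (2*m))\<^sup>2)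
              + (\<Sum>k = 1..m - 1. real (dfact (2 * int k - 2)) * x (2*m) * (r\<^sup>2 - (x (2*m))\<^sup>2) ^ (k - 1)
                   / (real (dfact (2 * int k - 1)) * r ^ (2*k))))"
      unfolding n1 using fodd[OF ry, of k] unfolding mk e nk by simp
next
  fix x :: "nat \<Rightarrow> real" and r :: real
  assume hr: "r = sqrt (\<Sum>j = 1..n + 1. (x j)\<^sup>2) \<and> r > \<bar>x (n + 1)\<bar>"
    fix m :: nat assume hm: "m \<ge> 2 \<and> n = 2*m - 2"
    then obtain k where mk: "m = Suc (Suc k)" by (metis add_2_eq_Suc le_Suc_ex)
    have nk: "n = 2*k+2" and n1: "n + 1 = 2 * m - 1" using hm mk by simp_all
    have ry: "r > \<bar>x (2*m - 1)\<bar>" using hr n1 by simp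
    have e: "2*int (Suc (Suc k)) - 4 = 2*int k" "2*int (Suc (Suc k)) - 3 = 2*int k + 1" "Suc (Suc k) - 1 = k + 1" by simp_all
    show "fint n r (x (n + 1)) =
           real (dfact (2 * int m - 4))
             / (real (dfact (2 * int m - 3)) * (r\<^sup>2 - (x (2*m - 1))\<^sup>2) ^ (m - 1))
           * (1 + (\<Sum>k = 1..m - 1. real (dfact (2 * int k - 3)) * x (2*m - 1) * (r\<^sup>2 - (x (2*m - 1))\<^sup>2) ^ (k - 1)
                   / (real (dfact (2 * int k - 2)) * r ^ (2*k - 1))))"
      unfolding n1 using feven[OF ry, of k] unfolding mk e nk by simp
qed

end
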